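(* Let $S = R \cup B$ be a finite set of points in the plane in general position (no three collinear), partitioned into red points $R$ and blue points $B$, with $|R| \ge 2$ and $|B| \ge 2$. Then $S$ contains a balanced $4$-hole.
   Context: A hole of $S$ is a simple polygon $Q$ whose vertices are points of $S$ and whose interior contains no point of $S$; a $k$-hole is a hole with $k$ vertices. Holes need not be convex. A $4$-hole is balanced if it has exactly two red and two blue vertices. *)

theory Defs
  imports "HOL-Analysis.Analysis"
begin

text \<open>Points of the plane are represented as complex numbers.\<close>

definition general_position :: "complex set \<Rightarrow> bool" where
  "general_position S \<longleftrightarrow>
     (\<forall>a\<in>S. \<forall>b\<in>S. \<forall>c\<in>S. a \<noteq> b \<and> a \<noteq> c \<and> b \<noteq> c \<longrightarrow> \<not> collinear {a, b, c})"

definition quad_path :: "complex \<Rightarrow> complex \<Rightarrow> complex \<Rightarrow> complex \<Rightarrow> real \<Rightarrow> complex" where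
  "quad_path a b c d = linepath a b +++ linepath b c +++ linepath c d +++ linepath d a"

definition is_4hole :: "complex set \<Rightarrow> complex \<Rightarrow> complex \<Rightarrow> complex \<Rightarrow> complex \<Rightarrow> bool" where
  "is_4hole S a b c d \<longleftrightarrow>
     a \<in> S \<and> b \<in> S \<and> c \<in> S \<and> d \<in> S \<and> distinct [a, b, c, d] \<and>
     simple_path (quad_path a b c d) \<and>
     inside (path_image (quad_path a b c d)) \<inter> S = {}"

end

theory Submission
  imports Defs
begin

lemma seg_coll: "x \<in> closed_segment a b \<Longrightarrow> collinear {a, x, (b::complex)}"
  by (simp add: between_imp_collinear between_mem_segment)

lemma adj_seg:
  fixes a b c :: complex
  assumes "\<not> collinear {a, b, c}"
  shows "closed_segment a b \<inter> closed_segment b c \<subseteq> {b}"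
proof
  fix x assume x: "x \<in> closed_segment a b \<inter> closed_segment b c"
  show "x \<in> {b}"
  proof (rule ccontr)
    assume "x \<notin> {b}"
    hence nb: "b \<noteq> x" by auto
    have 1: "collinear {a, b, x}" using seg_coll[of x a b] x by (simp add: insert_commute)
    have 2: "collinear {b, x, c}" using seg_coll[of x b c] x by simp
    from collinear_3_trans[OF 1 2 nb] assms show False by simp
  qed
qed

lemma cross_shorter:
  fixes p q r s :: complex
  assumes x: "x \<in> closed_segment p q" "x \<in> closed_segment r s"
    and nc1: "\<not> collinear {r, s, p}" and nc2: "\<not> collinear {q, p, r}"
  shows "dist p r + dist q s < dist p q + dist r s"
proof -
  have e1: "dist p q = dist p x + dist x q" using x(1) between between_mem_segment by blast
  have e2: "dist r s = dist r x + dist x s" using x(2) between between_mem_segment by blast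
  have t1: "dist p r \<le> dist p x + dist x r" by (rule dist_triangle)
  have t2: "dist q s \<le> dist q x + dist x s" by (metis dist_commute dist_triangle)
  have "dist p r \<noteq> dist p x + dist x r"
  proof
    assume "dist p r = dist p x + dist x r"
    hence xpr: "x \<in> closed_segment p r" using between between_mem_segment by blast
    show False
    proof (cases "x = p")
      case True
      then show ?thesis using x(2) seg_coll[of p r s] nc1 by (simp add: insert_commute)
    next
      case False
      have 1: "collinear {q, p, x}" using seg_coll[OF x(1)] by (simp add: insert_commute)
      have 2: "collinear {p, x, r}" using seg_coll[OF xpr] by simp
      from collinear_3_trans[OF 1 2] False nc2 show False by auto
    qed
  qed
  with t1 t2 e1 e2 show ?thesis by (simp add: dist_commute)
qed


lemma quad_image:
  "path_image (quad_path a b c d) = closed_segment a b \<union> closed_segment b c \<union> closed_segment c d \<union> closed_segment d a"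
  unfolding quad_path_def by (simp add: path_image_join Un_assoc)

lemma quad_simple:
  fixes a b c d :: complex
  assumes dist: "distinct [a,b,c,d]"
    and n1: "\<not> collinear {a,b,c}" and n2: "\<not> collinear {b,c,d}"
    and n3: "\<not> collinear {c,d,a}" and n4: "\<not> collinear {d,a,b}"
    and o1: "closed_segment a b \<inter> closed_segment c d = {}"
    and o2: "closed_segment b c \<inter> closed_segment d a = {}"
  shows "simple_path (quad_path a b c d)"
proof -
  have A1: "closed_segment a b \<inter> closed_segment b c \<subseteq> {b}" using adj_seg[OF n1] .
  have A2: "closed_segment b c \<inter> closed_segment c d \<subseteq> {c}" using adj_seg[OF n2] .
  have A3: "closed_segment c d \<inter> closed_segment d a \<subseteq> {d}" using adj_seg[OF n3] .
  have A4: "closed_segment d a \<inter> closed_segment a b \<subseteq> {a}" using adj_seg[OF n4] .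
  have arc3: "arc (linepath c d +++ linepath d a)"
    using dist A3 by (intro arc_join) auto
  have arc2: "arc (linepath b c +++ linepath c d +++ linepath d a)"
    using dist A2 A3 o2 arc3 by (intro arc_join) (auto simp: path_image_join)
  show ?thesis unfolding quad_path_def
    using dist arc2 A1 A4 o1
    by (intro simple_path_join_loop) (auto simp: path_image_join)
qed

lemma quad_inside:
  fixes a b c d :: complex
  shows "inside (path_image (quad_path a b c d)) \<subseteq> convex hull {a,b,c,d} - path_image (quad_path a b c d)"
proof (rule inside_subset)
  let ?H = "convex hull {a,b,c,d}"
  have bd: "bounded ?H" by (simp add: finite_imp_bounded_convex_hull)
  show "connected (- ?H)"
    by (rule connected_complement_bounded_convex) (use bd in auto)
  show "\<not> bounded (- ?H)"
    using bd bounded_Un[of ?H "- ?H"] by auto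
  have "path_image (quad_path a b c d) \<subseteq> ?H"
    unfolding quad_image using segment_convex_hull hull_mono
    by (smt (verit, ccfv_threshold) Un_least empty_subsetI insert_subset hull_subset subset_iff convex_contains_segment convex_convex_hull)
  then show "(?H - path_image (quad_path a b c d)) \<union> - ?H = - path_image (quad_path a b c d)" by auto
qed


lemma exch:
  fixes x1 x2 y1 y2 p :: complex
  assumes d: "distinct [x1,x2,y1,y2,p]" and nc: "\<not> collinear {y1,p,y2}"
    and p: "p \<in> convex hull {x1,x2,y1,y2}"
    and h1: "x1 \<in> convex hull {p,x2,y1,y2}"
    and h2: "x2 \<in> convex hull {p,x1,y1,y2}"
  shows False
proof -
  let ?K = "convex hull {x1,x2,y1,y2}"
  have K1: "convex hull {p,x2,y1,y2} = ?K"
  proof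
    show "convex hull {p,x2,y1,y2} \<subseteq> ?K"
      by (rule hull_minimal) (use p hull_subset[of "{x1,x2,y1,y2}" convex] in auto)
    show "?K \<subseteq> convex hull {p,x2,y1,y2}"
      by (rule hull_minimal) (use h1 hull_subset[of "{p,x2,y1,y2}" convex] in auto)
  qed
  have K2: "convex hull {p,x1,y1,y2} = ?K"
  proof
    show "convex hull {p,x1,y1,y2} \<subseteq> ?K"
      by (rule hull_minimal) (use p hull_subset[of "{x1,x2,y1,y2}" convex] in auto)
    show "?K \<subseteq> convex hull {p,x1,y1,y2}"
      by (rule hull_minimal) (use h2 hull_subset[of "{p,x1,y1,y2}" convex] in auto)
  qed
  have ext: "{e. e extreme_point_of ?K} \<subseteq> {y1,y2}"
  proof
    fix e assume "e \<in> {e. e extreme_point_of ?K}"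
    hence e: "e extreme_point_of ?K" by simp
    have "e \<in> {x1,x2,y1,y2}" using extreme_point_of_convex_hull[OF e] .
    moreover have "e \<in> {p,x2,y1,y2}" using extreme_point_of_convex_hull e K1 by metis
    moreover have "e \<in> {p,x1,y1,y2}" using extreme_point_of_convex_hull e K2 by metis
    ultimately show "e \<in> {y1,y2}" using d by auto
  qed
  have "?K = convex hull {e. e extreme_point_of ?K}"
    by (rule Krein_Milman_Minkowski) (auto simp: finite_imp_compact_convex_hull)
  also have "\<dots> \<subseteq> convex hull {y1,y2}" using ext by (rule hull_mono)
  finally have "p \<in> closed_segment y1 y2" using p by (auto simp: segment_convex_hull)
  then show False using seg_coll nc by blast
qed


lemma gpD: "general_position S \<Longrightarrow> a \<in> S \<Longrightarrow> b \<in> S \<Longrightarrow> c \<in> S \<Longrightarrow> distinct [a,b,c]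
  \<Longrightarrow> \<not> collinear {a,b,c}"
  unfolding general_position_def by auto

lemma good_order:
  fixes a b c d :: complex
  assumes gp: "general_position S" and S: "a \<in> S" "b \<in> S" "c \<in> S" "d \<in> S"
    and dd: "distinct [a,b,c,d]"
  shows "\<exists>p q r s. {p,q,r,s} = {a,b,c,d} \<and> distinct [p,q,r,s] \<and>
    closed_segment p q \<inter> closed_segment r s = {} \<and> closed_segment q r \<inter> closed_segment s p = {}"
proof -
  have cr: "dist p r + dist q s < dist p q + dist r s"
    if hh: "p \<in> {a,b,c,d}" "q \<in> {a,b,c,d}" "r \<in> {a,b,c,d}" "s \<in> {a,b,c,d}" "distinct [p,q,r,s]"
       "closed_segment p q \<inter> closed_segment r s \<noteq> {}" for p q r s
  proof -
    obtain x where x: "x \<in> closed_segment p q" "x \<in> closed_segment r s" using hh(6) by auto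
    have sub: "{a,b,c,d} \<subseteq> S" using S by auto
    show ?thesis
    proof (rule cross_shorter[OF x])
      show "\<not> collinear {r, s, p}" using hh sub by (intro gpD[OF gp]) auto
      show "\<not> collinear {q, p, r}" using hh sub by (intro gpD[OF gp]) auto
    qed
  qed
  define P1 where "P1 = dist a b + dist b c + dist c d + dist d a"
  define P2 where "P2 = dist a c + dist c b + dist b d + dist d a"
  define P3 where "P3 = dist a b + dist b d + dist d c + dist c a"
  consider "P1 \<le> P2 \<and> P1 \<le> P3" | "P2 \<le> P1 \<and> P2 \<le> P3" | "P3 \<le> P1 \<and> P3 \<le> P2" by linarith
  then show ?thesis
  proof cases
    case 1
    have "closed_segment a b \<inter> closed_segment c d = {}"
    proof (rule ccontr)
      assume "\<not> ?thesis"
      from cr[of a b c d] this dd have "dist a c + dist b d < dist a b + dist c d" by auto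
      with 1 show False unfolding P1_def P2_def P3_def by (simp add: dist_commute)
    qed
    moreover have "closed_segment b c \<inter> closed_segment d a = {}"
    proof (rule ccontr)
      assume "\<not> ?thesis"
      from cr[of b c d a] this dd have "dist b d + dist c a < dist b c + dist d a" by auto
      with 1 show False unfolding P1_def P2_def P3_def by (simp add: dist_commute)
    qed
    moreover have "distinct [a,b,c,d]" using dd by auto
    ultimately have "{a,b,c,d} = {a,b,c,d} \<and> distinct [a,b,c,d] \<and> closed_segment a b \<inter> closed_segment c d = {} \<and> closed_segment b c \<inter> closed_segment d a = {}" by (simp only: simp_thms)
    then show ?thesis by (intro exI)
  next
    case 2
    have "closed_segment a c \<inter> closed_segment b d = {}"
    proof (rule ccontr)
      assume "\<not> ?thesis"
      from cr[of a c b d] this dd have "dist a b + dist c d < dist a c + dist b d" by auto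
      with 2 show False unfolding P1_def P2_def P3_def by (simp add: dist_commute)
    qed
    moreover have "closed_segment c b \<inter> closed_segment d a = {}"
    proof (rule ccontr)
      assume "\<not> ?thesis"
      from cr[of c b d a] this dd have "dist c d + dist b a < dist c b + dist d a" by auto
      with 2 show False unfolding P1_def P2_def P3_def by (simp add: dist_commute)
    qed
    moreover have "{a,c,b,d} = {a,b,c,d}" by auto
    moreover have "distinct [a,c,b,d]" using dd by auto
    ultimately have "{a,c,b,d} = {a,b,c,d} \<and> distinct [a,c,b,d] \<and> closed_segment a c \<inter> closed_segment b d = {} \<and> closed_segment c b \<inter> closed_segment d a = {}" by (simp only: simp_thms)
    then show ?thesis by (intro exI)
  next
    case 3
    have "closed_segment a b \<inter> closed_segment d c = {}"
    proof (rule ccontr)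
      assume "\<not> ?thesis"
      from cr[of a b d c] this dd have "dist a d + dist b c < dist a b + dist d c" by auto
      with 3 show False unfolding P1_def P2_def P3_def by (simp add: dist_commute)
    qed
    moreover have "closed_segment b d \<inter> closed_segment c a = {}"
    proof (rule ccontr)
      assume "\<not> ?thesis"
      from cr[of b d c a] this dd have "dist b c + dist d a < dist b d + dist c a" by auto
      with 3 show False unfolding P1_def P2_def P3_def by (simp add: dist_commute)
    qed
    moreover have "{a,b,d,c} = {a,b,c,d}" by auto
    moreover have "distinct [a,b,d,c]" using dd by auto
    ultimately have "{a,b,d,c} = {a,b,c,d} \<and> distinct [a,b,d,c] \<and> closed_segment a b \<inter> closed_segment d c = {} \<and> closed_segment b d \<inter> closed_segment c a = {}" by (simp only: simp_thms)
    then show ?thesis by (intro exI)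
  qed
qed


lemma hull_sub_ins: "p \<in> convex hull T \<Longrightarrow> T' \<subseteq> insert p T \<Longrightarrow> convex hull T' \<subseteq> convex hull T"
  by (rule hull_minimal) (use hull_subset[of T convex] in auto)

lemma card_less:
  assumes "finite S" "x \<in> S" "x \<in> convex hull T" "x \<notin> convex hull T'" "convex hull T' \<subseteq> convex hull T"
  shows "card (S \<inter> convex hull T') < card (S \<inter> convex hull T)"
  by (rule psubset_card_mono) (use assms in auto)

theorem mainTheorem1:
  fixes R B :: "complex set"
  assumes "finite R" and "finite B" and "R \<inter> B = {}"
    and "general_position (R \<union> B)"
    and "card R \<ge> 2" and "card B \<ge> 2"
  shows "\<exists>a b c d. is_4hole (R \<union> B) a b c d \<and>
           card ({a, b, c, d} \<inter> R) = 2 \<and> card ({a, b, c, d} \<inter> B) = 2"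
proof -
  define S where "S = R \<union> B"
  have fS: "finite S" using assms(1,2) S_def by auto
  have gp: "general_position S" using assms(4) S_def by simp
  define P where "P = (\<lambda>(r1,r2,b1,b2). r1 \<in> R \<and> r2 \<in> R \<and> r1 \<noteq> r2 \<and> b1 \<in> B \<and> b2 \<in> B \<and> b1 \<noteq> b2)"
  define m where "m = (\<lambda>(r1::complex,r2::complex,b1::complex,b2::complex). card (S \<inter> convex hull {r1,r2,b1,b2}))"
  obtain r1 r2 where r: "r1 \<in> R" "r2 \<in> R" "r1 \<noteq> r2"
    using assms(5) by (metis card_2_iff' card_le_Suc_iff numeral_2_eq_2 obtain_subset_with_card_n subsetD)
  obtain b1 b2 where b: "b1 \<in> B" "b2 \<in> B" "b1 \<noteq> b2"
    using assms(6) by (metis card_2_iff' card_le_Suc_iff numeral_2_eq_2 obtain_subset_with_card_n subsetD)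
  have "P (r1,r2,b1,b2)" using r b P_def by simp
  then obtain t where Pt: "P t" and tmin: "\<And>y. P y \<Longrightarrow> m t \<le> m y"
    using ex_has_least_nat[of P _ m] by blast
  obtain r1 r2 b1 b2 where t: "t = (r1,r2,b1,b2)" by (cases t) auto
  have r: "r1 \<in> R" "r2 \<in> R" "r1 \<noteq> r2" and b: "b1 \<in> B" "b2 \<in> B" "b1 \<noteq> b2"
    using Pt t P_def by auto
  have minP: "card (S \<inter> convex hull {r1,r2,b1,b2}) \<le> card (S \<inter> convex hull {x1,x2,y1,y2})"
    if "x1 \<in> R" "x2 \<in> R" "x1 \<noteq> x2" "y1 \<in> B" "y2 \<in> B" "y1 \<noteq> y2" for x1 x2 y1 y2
    using tmin[of "(x1,x2,y1,y2)"] that t unfolding P_def m_def by auto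
  have dst: "distinct [r1,r2,b1,b2]" using r b assms(3) by auto
  have inS: "r1 \<in> S" "r2 \<in> S" "b1 \<in> S" "b2 \<in> S" using r b S_def by auto
  have empty: "S \<inter> convex hull {r1,r2,b1,b2} \<subseteq> {r1,r2,b1,b2}"
  proof
    fix p assume pin: "p \<in> S \<inter> convex hull {r1,r2,b1,b2}"
    show "p \<in> {r1,r2,b1,b2}"
    proof (rule ccontr)
      assume pn: "p \<notin> {r1,r2,b1,b2}"
      have pS: "p \<in> S" and pc: "p \<in> convex hull {r1,r2,b1,b2}" using pin by auto
      show False
      proof (cases "p \<in> R")
        case True
        have h1: "r1 \<in> convex hull {p,r2,b1,b2}"
        proof (rule ccontr)
          assume "\<not> ?thesis"
          from card_less[OF fS inS(1) _ this hull_sub_ins[OF pc]] hull_subset[of "{r1,r2,b1,b2}" convex]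
          have "card (S \<inter> convex hull {p,r2,b1,b2}) < card (S \<inter> convex hull {r1,r2,b1,b2})" by auto
          with minP[of p r2 b1 b2] True r b pn show False by auto
        qed
        have h2: "r2 \<in> convex hull {p,r1,b1,b2}"
        proof (rule ccontr)
          assume "\<not> ?thesis"
          from card_less[OF fS inS(2) _ this hull_sub_ins[OF pc]] hull_subset[of "{r1,r2,b1,b2}" convex]
          have "card (S \<inter> convex hull {p,r1,b1,b2}) < card (S \<inter> convex hull {r1,r2,b1,b2})" by auto
          with minP[of p r1 b1 b2] True r b pn show False by auto
        qed
        have nc: "\<not> collinear {b1,p,b2}" using gp inS pS pn b by (intro gpD[OF gp]) auto
        show False using exch[OF _ nc pc h1 h2] dst pn by auto
      next
        case False
        hence pB: "p \<in> B" using pS S_def by auto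
        have h1: "b1 \<in> convex hull {p,b2,r1,r2}"
        proof (rule ccontr)
          assume "\<not> ?thesis"
          hence "b1 \<notin> convex hull {r1,r2,p,b2}" by (simp add: insert_commute)
          from card_less[OF fS inS(3) _ this hull_sub_ins[OF pc]] hull_subset[of "{r1,r2,b1,b2}" convex]
          have "card (S \<inter> convex hull {r1,r2,p,b2}) < card (S \<inter> convex hull {r1,r2,b1,b2})" by auto
          with minP[of r1 r2 p b2] pB r b pn show False by auto
        qed
        have h2: "b2 \<in> convex hull {p,b1,r1,r2}"
        proof (rule ccontr)
          assume "\<not> ?thesis"
          hence "b2 \<notin> convex hull {r1,r2,p,b1}" by (simp add: insert_commute)
          from card_less[OF fS inS(4) _ this hull_sub_ins[OF pc]] hull_subset[of "{r1,r2,b1,b2}" convex]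
          have "card (S \<inter> convex hull {r1,r2,p,b1}) < card (S \<inter> convex hull {r1,r2,b1,b2})" by auto
          with minP[of r1 r2 p b1] pB r b pn show False by auto
        qed
        have nc: "\<not> collinear {r1,p,r2}" using gp inS pS pn r by (intro gpD[OF gp]) auto
        have pc': "p \<in> convex hull {b1,b2,r1,r2}" using pc by (simp add: insert_commute)
        show False using exch[OF _ nc pc' h1 h2] dst pn by auto
      qed
    qed
  qed
  obtain p q u v where o: "{p,q,u,v} = {r1,r2,b1,b2}" "distinct [p,q,u,v]"
    "closed_segment p q \<inter> closed_segment u v = {}" "closed_segment q u \<inter> closed_segment v p = {}"
    using good_order[OF gp inS dst] by blast
  have sub4: "{p,q,u,v} \<subseteq> S" unfolding o(1) using inS by auto
  have inS': "p \<in> S" "q \<in> S" "u \<in> S" "v \<in> S" using sub4 by auto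
  have simp: "simple_path (quad_path p q u v)"
  proof (rule quad_simple[OF o(2) _ _ _ _ o(3) o(4)])
    show "\<not> collinear {p,q,u}" using o(2) inS' by (intro gpD[OF gp]) auto
    show "\<not> collinear {q,u,v}" using o(2) inS' by (intro gpD[OF gp]) auto
    show "\<not> collinear {u,v,p}" using o(2) inS' by (intro gpD[OF gp]) auto
    show "\<not> collinear {v,p,q}" using o(2) inS' by (intro gpD[OF gp]) auto
  qed
  have verts: "{p,q,u,v} \<subseteq> path_image (quad_path p q u v)"
    unfolding quad_image by auto
  have ins: "inside (path_image (quad_path p q u v)) \<inter> S = {}"
    using quad_inside[of p q u v] empty o(1) verts by auto
  have "is_4hole S p q u v" unfolding is_4hole_def using inS' o(2) simp ins by auto
  moreover have "{p,q,u,v} \<inter> R = {r1,r2}" using o(1) r b assms(3) by auto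
  moreover have "{p,q,u,v} \<inter> B = {b1,b2}" using o(1) r b assms(3) by auto
  ultimately show ?thesis using r(3) b(3) unfolding S_def by (intro exI[of _ p] exI[of _ q] exI[of _ u] exI[of _ v]) simp
qed

end
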